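(* Let $N\le K$ be positive integers with $K\le\frac{N^2+1}{2}$. Then for every $M\in[\frac1K,\frac NK]$, the worst-case rate achieved by the lower convex envelope of the pairs $\left(N-\frac{N}{K}\frac{N+1}{g+1},\frac{N}{Kg}\right)$, $g\in\{1,\dots,N\}$, is no larger than the rate at memory $M$ of the lower convex envelope of the pairs $$(R_{\mathrm{MDS}},M_{\mathrm{MDS}})=\left(\frac{N(K-t)}{K},\ \frac{t\left[(N-1)t+K-N\right]}{K(K-1)}\right),\quad t=0,1,\dots,K.$$
   Context: In the caching setting with $N$ files of $F$ bits, $K$ users each with cache $MF$ bits, and worst-case delivery rate $R^*$ (in units of $F$ bits), the pairs $(R_{\mathrm{MDS}},M_{\mathrm{MDS}})$ above are rate–memory pairs achieved by a previously known scheme (based on MDS and rank-metric codes); the pairs $\left(N-\frac{N}{K}\frac{N+1}{g+1},\frac{N}{Kg}\right)$, $g=1,\dots,N$, are those achieved by the scheme of this paper. The lower convex envelope of a finite set of (rate, memory) points is taken as a function of $M$. *)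

theory Defs
  imports "HOL-Analysis.Analysis"
begin

text \<open>Points are (memory, rate) pairs.\<close>
definition lower_convex_envelope :: "(real \<times> real) set \<Rightarrow> real \<Rightarrow> real" where
  "lower_convex_envelope P M = Inf {r. (M, r) \<in> convex hull P}"

definition new_points :: "nat \<Rightarrow> nat \<Rightarrow> (real \<times> real) set" where
  "new_points N K = (\<lambda>g::nat. (real N / (real K * real g),
       real N - real N / real K * ((real N + 1) / (real g + 1)))) ` {1..N}"

definition mds_points :: "nat \<Rightarrow> nat \<Rightarrow> (real \<times> real) set" where
  "mds_points N K = (\<lambda>t::nat.
       (real t * ((real N - 1) * real t + real K - real N) / (real K * (real K - 1)),
        real N * (real K - real t) / real K)) ` {0..K}"

end

theory Submission
  imports Defs
begin

lemma consec: fixes m::int shows "0 \<le> real_of_int m * (real_of_int m + 1)"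
proof (cases "m \<ge> 0")
  case True then show ?thesis by simp
next
  case False then have "real_of_int m + 1 \<le> 0" by linarith
  moreover have "real_of_int m \<le> 0" using False by simp
  ultimately show ?thesis by (simp add: mult_nonpos_nonpos)
qed

lemma lemF: fixes N g t :: nat assumes "1 \<le> g"
  shows "0 \<le> 2*real g*(real g+1)*real t^2 - (real g+1)*(real g+2*real N)*real t + real N*(real N+1)"
proof -
  define m where "m = int N - int (g+1) * int t"
  have id: "2*real g*(real g+1)*real t^2 - (real g+1)*(real g+2*real N)*real t + real N*(real N+1)
     = real_of_int m * (real_of_int m + 1) + (real g^2 - 1) * (real_of_int (int t - 1) * (real_of_int (int t - 1) + 1))"
    unfolding m_def by (simp add: algebra_simps power2_eq_square)
  have "real g^2 - 1 \<ge> 0" using assms proof -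
    have "real g \<ge> 1" using assms by simp
    then have "real g * real g \<ge> 1 * 1" by (intro mult_mono) auto
    then show ?thesis by (simp add: power2_eq_square)
  qed
  then show ?thesis unfolding id using consec[of m] consec[of "int t - 1"] by simp
qed

lemma lemH: fixes N g t :: nat assumes "1 \<le> g" "g + 1 \<le> N"
  shows "0 \<le> (real N+1)*real g*(real g+1)*real t^2 - real N*(real g+1)*(real g+2)*real t + real N*(real N+1)"
proof -
  have c4: "real g * real t - real g \<ge> 2" if "t \<ge> 2" "\<not> (t = 2 \<and> g = 1)"
  proof (cases "g \<ge> 2")
    case True
    have "real g * (real t - 1) \<ge> 2 * 1" using True that(1)
      by (intro mult_mono) auto
    then show ?thesis by (simp add: algebra_simps)
  next
    case False
    then have "g = 1" using assms by simp
    then have "t \<ge> 3" using that by auto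
    then show ?thesis using \<open>g = 1\<close> by simp
  qed
  consider "t = 0" | "t = 1" | "t = 2" "g = 1" | "real g * real t - real g \<ge> 2"
    using c4 by (cases "t \<ge> 2"; cases "t = 1"; auto)
  then show ?thesis
  proof cases
    case 1 then show ?thesis by simp
  next
    case 2
    have "(real N+1)*real g*(real g+1) - real N*(real g+1)*(real g+2) + real N*(real N+1)
        = (real N - real g) * (real N - real g - 1)" by (simp add: algebra_simps)
    moreover have "real N - real g \<ge> 1" using assms by simp
    ultimately show ?thesis using 2 by simp
  next
    case 3
    have "(real N - 3/2)^2 \<ge> 0" by simp
    then show ?thesis using 3 by (simp add: algebra_simps power2_eq_square)
  next
    case 4
    have "real g * real t - real g - 2 \<ge> 0" using 4 by simp
    then have "0 \<le> real N * ((real g+1)*real t*(real g * real t - real g - 2))" by simp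
    moreover have "(real N+1)*real g*(real g+1)*real t^2 - real N*(real g+1)*(real g+2)*real t + real N*(real N+1)
      = real N^2 + real N + real N * ((real g+1)*real t*(real g * real t - real g - 2)) + real g*(real g+1)*real t^2"
      by (simp add: algebra_simps power2_eq_square)
    moreover have "0 \<le> real g*(real g+1)*real t^2" by simp
    ultimately show ?thesis by (simp add: add_nonneg_nonneg)
  qed
qed

lemma keyf: fixes N K g t :: nat
  assumes "1 \<le> g" "g + 1 \<le> N" "N \<le> K" "real K \<le> (real N ^ 2 + 1) / 2"
  shows "0 \<le> (real N+1)*real g*(real g+1)*(real N-1)*real t^2
     + ((real N+1)*real g*(real g+1)*(real K-real N) - real N*(real g+1)*(real g+2)*(real K-1))*real t
     + real N*(real N+1)*(real K-1)" (is "0 \<le> ?f")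
proof -
  define c where "c = (real g+1)*real t*(real g-2*real N)+real N*(real N+1)"
  define h where "h = (real N+1)*real g*(real g+1)*real t^2 - real N*(real g+1)*(real g+2)*real t + real N*(real N+1)"
  define F where "F = 2*real g*(real g+1)*real t^2 - (real g+1)*(real g+2*real N)*real t + real N*(real N+1)"
  have e1: "?f = (real N - 1)*h + (real K - real N)*c" unfolding h_def c_def by (simp add: algebra_simps power2_eq_square)
  have e2': "2*?f = (real N + 1)*(real N - 1)*F + (2*real K - (real N ^ 2 + 1))*c" unfolding F_def c_def by (simp add: algebra_simps power2_eq_square)
  have e2: "?f = (real N + 1)*(real N - 1)*F/2 + (real K - (real N ^ 2 + 1) / 2)*c" using e2' by (simp add: field_simps)
  have h0: "0 \<le> h" unfolding h_def using lemH assms by blast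
  have F0: "0 \<le> F" unfolding F_def using lemF assms by blast
  have N1: "real N \<ge> 1" using assms by simp
  show ?thesis
  proof (cases "c \<ge> 0")
    case True then show ?thesis unfolding e1 using h0 N1 assms(3) by simp
  next
    case False
    have "0 \<le> (real K - (real N ^ 2 + 1) / 2)*c" using False assms(4) by (intro mult_nonpos_nonpos) auto
    moreover have "0 \<le> (real N + 1)*(real N - 1)*F/2" using F0 N1 by simp
    ultimately show ?thesis unfolding e2 by simp
  qed
qed

lemma lineidR: fixes n k g t :: real
  assumes "k \<noteq> 0" "k - 1 \<noteq> 0" "g \<noteq> 0" "g + 1 \<noteq> 0" "g + 2 \<noteq> 0"
  shows "n*(k - t)/k -
     ((-(n+1)*g/(g+2)) * (t*((n-1)*t + k - n)/(k*(k-1)))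
      + ((n - n/k*((n+1)/(g+1))) - (-(n+1)*g/(g+2)) * (n/(k*g))))
   = ((n+1)*g*(g+1)*(n-1)*t^2
     + ((n+1)*g*(g+1)*(k-n) - n*(g+1)*(g+2)*(k-1))*t
     + n*(n+1)*(k-1)) / (k*(k-1)*(g+1)*(g+2))"
  using assms apply (simp add: divide_simps)
  apply (simp only: power2_eq_square)
  apply algebra
  done


theorem corollary2:
  fixes N K :: nat and M :: real
  assumes "0 < N" and "N \<le> K" and "2 \<le> K"
    and "real K \<le> (real N ^ 2 + 1) / 2"
    and "1 / real K \<le> M" and "M \<le> real N / real K"
  shows "lower_convex_envelope (new_points N K) M \<le> lower_convex_envelope (mds_points N K) M"
proof -
  have N2: "N \<ge> 2"
  proof (rule ccontr)
    assume "\<not> N \<ge> 2"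
    then have "N = 1" using assms(1) by simp
    then show False using assms(3,4) by simp
  qed
  have Kpos: "real K > 0" using assms(3) by simp
  have Mpos: "M > 0" using assms(5) Kpos by (meson divide_pos_pos less_le_trans zero_less_one)
  obtain g where g1: "1 \<le> g" and g2: "g + 1 \<le> N"
    and lo: "real N / (real K * (real g + 1)) \<le> M" and hi: "M \<le> real N / (real K * real g)"
  proof -
    define x where "x = real N / (real K * M)"
    have KM: "real K * M > 0" using Kpos Mpos by simp
    have Nx: "real N = x * (real K * M)" unfolding x_def using KM Kpos Mpos by (simp add: field_simps)
    have "real K * M \<le> real N" using assms(6) Kpos by (simp add: field_simps)
    then have x1: "1 \<le> x" unfolding x_def using KM by simp
    have "1 \<le> real K * M" using assms(5) Kpos by (simp add: field_simps)
    then have xN: "x \<le> real N"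
    proof -
      have "real N * 1 \<le> real N * (real K * M)" using \<open>1 \<le> real K * M\<close> by (intro mult_left_mono) auto
      then show ?thesis using KM unfolding x_def by (subst pos_divide_le_eq) auto
    qed
    have "\<exists>g::nat. 1 \<le> g \<and> g + 1 \<le> N \<and> real g \<le> x \<and> x \<le> real g + 1"
    proof (cases "x \<ge> real N - 1")
      case True
      then show ?thesis using N2 xN by (intro exI[of _ "N - 1"]) (auto simp: of_nat_diff)
    next
      case False
      define g where "g = nat \<lfloor>x\<rfloor>"
      have f1: "\<lfloor>x\<rfloor> \<ge> 1" using x1 by simp
      have rg: "real g = of_int \<lfloor>x\<rfloor>" unfolding g_def using f1 by simp
      have "real g \<le> x" "x \<le> real g + 1" unfolding rg by linarith+
      moreover have "1 \<le> g" unfolding g_def using f1 by (subst le_nat_iff) auto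
      moreover have "real g + 1 < real N" using False \<open>real g \<le> x\<close> by linarith
      ultimately show ?thesis by (intro exI[of _ g]) auto
    qed
    then obtain g :: nat where g: "1 \<le> g" "g + 1 \<le> N" "real g \<le> x" "x \<le> real g + 1" by blast
    have "real N / (real K * (real g + 1)) \<le> M"
    proof -
      have "x * (real K * M) \<le> (real g + 1) * (real K * M)" using g(4) KM by (intro mult_right_mono) auto
      then have "real N \<le> M * (real K * (real g + 1))" using Nx by (simp add: algebra_simps)
      then show ?thesis using Kpos by (subst pos_divide_le_eq) auto
    qed
    moreover have "M \<le> real N / (real K * real g)"
    proof -
      have "real g * (real K * M) \<le> x * (real K * M)" using g(3) KM by (intro mult_right_mono) auto
      then have "M * (real K * real g) \<le> real N" using Nx by (simp add: algebra_simps)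
      then show ?thesis using Kpos g(1) by (subst pos_le_divide_eq) auto
    qed
    ultimately show ?thesis using that g by blast
  qed
  define \<alpha> where "\<alpha> = -(real N+1)*real g/(real g+2)"
  define \<beta> where "\<beta> = (real N - real N/real K*((real N+1)/(real g+1))) - \<alpha> * (real N/(real K*real g))"
  define S where "S = {p::real\<times>real. inner (\<alpha>, -1::real) p \<le> -\<beta>}"
  have Smem: "p \<in> S \<longleftrightarrow> \<alpha> * fst p + \<beta> \<le> snd p" for p
    unfolding S_def by (cases p) auto
  have convS: "convex S" unfolding S_def by (rule convex_halfspace_le)
  have "mds_points N K \<subseteq> S"
  proof
    fix p assume "p \<in> mds_points N K"
    then obtain t where t: "t \<in> {0..K}" and p: "p = (real t * ((real N - 1) * real t + real K - real N) / (real K * (real K - 1)),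
        real N * (real K - real t) / real K)" unfolding mds_points_def by auto
    have nz: "real K \<noteq> 0" "real K - 1 \<noteq> 0" "real g \<noteq> 0" "real g + 1 \<noteq> 0" "real g + 2 \<noteq> 0"
      using assms(3) g1 by auto
    have f0: "0 \<le> (real N+1)*real g*(real g+1)*(real N-1)*real t^2
     + ((real N+1)*real g*(real g+1)*(real K-real N) - real N*(real g+1)*(real g+2)*(real K-1))*real t
     + real N*(real N+1)*(real K-1)" using keyf g1 g2 assms(2,4) by blast
    have D: "0 < real K*(real K-1)*(real g+1)*(real g+2)" using assms(3) by simp
    show "p \<in> S" unfolding Smem p fst_conv snd_conv
      using lineidR[OF nz, of "real N" "real t"] f0 D unfolding \<alpha>_def \<beta>_def
      using divide_nonneg_pos[OF f0 D] by linarith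
  qed
  then have hullS: "convex hull (mds_points N K) \<subseteq> S" by (rule hull_minimal) (rule convS)
  define A where "A = {r. (M, r) \<in> convex hull (mds_points N K)}"
  have Alow: "\<alpha> * M + \<beta> \<le> r" if "r \<in> A" for r
    using that hullS Smem unfolding A_def by fastforce
  have "(0, real N) \<in> mds_points N K" unfolding mds_points_def
    using Kpos by (intro image_eqI[of _ _ 0]) auto
  moreover have "(real N, 0) \<in> mds_points N K" unfolding mds_points_def
  proof (rule image_eqI[of _ _ K])
    have "real K - 1 \<noteq> 0" using assms(3) by simp
    then have "real K * ((real N - 1) * real K + real K - real N) / (real K * (real K - 1)) = real N"
      using Kpos by (simp add: field_simps)
    then show "(real N, 0) = (real K * ((real N - 1) * real K + real K - real N) / (real K * (real K - 1)),
        real N * (real K - real K) / real K)" by simp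
  qed auto
  ultimately have "(1 - M / real N) *\<^sub>R (0, real N) + (M / real N) *\<^sub>R (real N, 0) \<in> convex hull (mds_points N K)"
  proof (intro convexD convex_convex_hull hull_inc)
    have "M \<le> real N / real K" by (fact assms(6))
    also have "\<dots> \<le> real N"
    proof -
      have "real N * 1 \<le> real N * real K" using assms(3) by (intro mult_left_mono) auto
      then show ?thesis using Kpos by (subst pos_divide_le_eq) auto
    qed
    finally show "0 \<le> 1 - M / real N" using assms(1) by simp
  qed (use Mpos in auto)
  moreover have "(1 - M / real N) *\<^sub>R (0, real N) + (M / real N) *\<^sub>R (real N, 0) = (M, real N - M)"
    using assms(1) by (simp add: field_simps)
  ultimately have Ane: "A \<noteq> {}" unfolding A_def by auto
  have IA: "\<alpha> * M + \<beta> \<le> Inf A" using Ane Alow by (intro cInf_greatest) auto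
  define B where "B = {r. (M, r) \<in> convex hull (new_points N K)}"
  define Mg where "Mg = real N / (real K * real g)"
  define Mg1 where "Mg1 = real N / (real K * (real g + 1))"
  define Rg where "Rg = real N - real N/real K*((real N+1)/(real g+1))"
  define Rg1 where "Rg1 = real N - real N/real K*((real N+1)/(real g+1+1))"
  have Pg: "(Mg, Rg) \<in> new_points N K" unfolding new_points_def Mg_def Rg_def
    using g1 g2 by (intro image_eqI[of _ _ g]) auto
  have Pg1: "(Mg1, Rg1) \<in> new_points N K" unfolding new_points_def Mg1_def Rg1_def
    using g1 g2 by (intro image_eqI[of _ _ "g+1"]) auto
  have Lg: "\<alpha> * Mg + \<beta> = Rg" unfolding \<beta>_def Mg_def Rg_def by simp
  have Lg1: "\<alpha> * Mg1 + \<beta> = Rg1"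
  proof -
    have "real K \<noteq> 0" "real g \<noteq> 0" "real g + 1 \<noteq> 0" "real g + 2 \<noteq> 0" using assms(3) g1 by auto
    then show ?thesis unfolding \<beta>_def \<alpha>_def Mg1_def Rg1_def
      apply (simp add: divide_simps)
      apply algebra
      done
  qed
  have gap: "Mg1 < Mg" unfolding Mg_def Mg1_def using g1 g2 Kpos
    by (intro divide_strict_left_mono) auto
  define u where "u = (M - Mg1) / (Mg - Mg1)"
  have loM: "Mg1 \<le> M" using lo unfolding Mg1_def .
  have hiM: "M \<le> Mg" using hi unfolding Mg_def .
  have u0: "0 \<le> u" "u \<le> 1"
  proof -
    show "0 \<le> u" unfolding u_def using gap loM by (intro divide_nonneg_pos) auto
    show "u \<le> 1" unfolding u_def using gap hiM by (subst pos_divide_le_eq) auto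
  qed
  have uM: "u * Mg + (1 - u) * Mg1 = M"
  proof -
    have "u * (Mg - Mg1) = M - Mg1" unfolding u_def using gap by simp
    then have e: "u*Mg - u*Mg1 = M - Mg1" by (simp add: right_diff_distrib)
    have "(1-u)*Mg1 = Mg1 - u*Mg1" by (simp add: left_diff_distrib)
    then show ?thesis using e by linarith
  qed
  have "u *\<^sub>R (Mg, Rg) + (1 - u) *\<^sub>R (Mg1, Rg1) \<in> convex hull (new_points N K)"
    using u0 Pg Pg1 by (intro convexD convex_convex_hull hull_inc) auto
  moreover have "u *\<^sub>R (Mg, Rg) + (1 - u) *\<^sub>R (Mg1, Rg1) = (M, \<alpha> * M + \<beta>)"
  proof -
    have "u * Rg + (1 - u) * Rg1 = \<alpha> * (u * Mg + (1 - u) * Mg1) + \<beta>"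
      unfolding Lg[symmetric] Lg1[symmetric] by (simp add: algebra_simps)
    then show ?thesis using uM by simp
  qed
  ultimately have inB: "\<alpha> * M + \<beta> \<in> B" unfolding B_def by simp
  have "compact (convex hull (new_points N K))"
    by (rule compact_convex_hull) (simp add: new_points_def finite_imp_compact)
  then have "compact (snd ` (convex hull (new_points N K)))"
    by (intro compact_continuous_image continuous_intros)
  then have "bdd_below (snd ` (convex hull (new_points N K)))"
    by (intro bounded_imp_bdd_below compact_imp_bounded)
  moreover have "B \<subseteq> snd ` (convex hull (new_points N K))" unfolding B_def by force
  ultimately have "bdd_below B" by (rule bdd_below_mono)
  then have "Inf B \<le> \<alpha> * M + \<beta>" by (rule cInf_lower[OF inB])
  then show ?thesis unfolding lower_convex_envelope_def using IA A_def B_def by simp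
qed

end
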